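(* Let $E=\mathbb{Q}(i,\sqrt5)$, let $\tau=(1+\sqrt5)/2$, and let $\sigma$ be the automorphism of $E$ with $\sigma(i)=i$ and $\sigma(\sqrt5)=-\sqrt5$. For a real number $N\ge 1$ let $\mathbf{L}(N)$ be the set of numbers $x=(a+bi)+(c+di)\tau\in E$ with $a,b,c,d\in\mathbb{Z}$ and $|a|,|b|,|c|,|d|\le N$. For $x_1,x_2\in E$ put $$X(x_1,x_2)=\begin{pmatrix} x_1 & \sigma(x_1)\\ i\,x_2 & \sigma(x_2)\end{pmatrix},\qquad D(N_1,N_2)=\min_{x_1\in\mathbf{L}(N_1)\setminus\{0\},\ x_2\in\mathbf{L}(N_2)\setminus\{0\}}\left|\det X(x_1,x_2)\right|.$$ Then there exists a constant $K>0$ such that for all $N\ge1$, $$D(N^{3/5},N^{2/5})\le\frac{K}{N}.$$ In particular, there exist constants $C_\ell,C_u>0$ such that for all sufficiently large $N$, $$\frac{C_\ell}{N^2}\le D(N,N)\le\frac{C_u}{N^{5/3}},$$ i.e. the decay exponent of this code lies between $5/3$ and $2$.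
   Context: This is the two-user single-antenna Badr–Belfiore multiuser MIMO code; $\det X(x_1,x_2)\neq0$ whenever $x_1,x_2\neq0$. A code is said to decay with exponent at least $\delta_1$ if $D(N,N)\le C_uN^{-\delta_1}$ and with exponent at most $\delta_2$ if $D(N,N)\ge C_\ell N^{-\delta_2}$, for positive constants $C_u,C_\ell$. *)

theory Defs
  imports Complex_Main
begin

text \<open>Elements of E = Q(i, sqrt 5) are viewed as complex numbers.
  The lattice points (a+bi)+(c+di)tau are parametrised by integer quadruples.\<close>

definition tau :: real where "tau = (1 + sqrt 5) / 2"

text \<open>sigma fixes i and sends sqrt 5 to - sqrt 5, hence tau to (1 - sqrt 5)/2.\<close>
definition tau_conj :: real where "tau_conj = (1 - sqrt 5) / 2"

type_synonym quad = "int \<times> int \<times> int \<times> int"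

fun latval :: "quad \<Rightarrow> complex" where
  "latval (a, b, c, d) = Complex (of_int a) (of_int b) + Complex (of_int c) (of_int d) * complex_of_real tau"

fun latsigma :: "quad \<Rightarrow> complex" where
  "latsigma (a, b, c, d) = Complex (of_int a) (of_int b) + Complex (of_int c) (of_int d) * complex_of_real tau_conj"

definition Lquad :: "real \<Rightarrow> quad set" where
  "Lquad N = {(a, b, c, d). \<bar>of_int a\<bar> \<le> N \<and> \<bar>of_int b\<bar> \<le> N \<and> \<bar>of_int c\<bar> \<le> N \<and> \<bar>of_int d\<bar> \<le> N}"

definition detX :: "quad \<Rightarrow> quad \<Rightarrow> complex" where
  "detX q1 q2 = latval q1 * latsigma q2 - \<i> * latval q2 * latsigma q1"

definition Dmin :: "real \<Rightarrow> real \<Rightarrow> real" where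
  "Dmin N1 N2 = Min {cmod (detX q1 q2) | q1 q2.
      q1 \<in> Lquad N1 \<and> q2 \<in> Lquad N2 \<and> latval q1 \<noteq> 0 \<and> latval q2 \<noteq> 0}"

end

theory Submission
  imports Defs
begin

lemma sqrt5_sq: "sqrt 5 * sqrt 5 = (5::real)" by simp
lemma tau_sum: "tau + tau_conj = 1" unfolding tau_def tau_conj_def by (simp add: field_simps)
lemma tau_prod: "tau * tau_conj = -1" unfolding tau_def tau_conj_def
  by (simp add: field_simps)
lemma tau_diff: "tau - tau_conj = sqrt 5" unfolding tau_def tau_conj_def by (simp add: field_simps)
lemma tau_bounds: "1 < tau" "tau < 2" unfolding tau_def
proof -
  have "2 < sqrt 5" by (rule real_less_rsqrt) simp
  moreover have "sqrt 5 < 3" by (rule real_sqrt_less_iff[where y=9, simplified, THEN iffD2]) simp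
  ultimately show "1 < (1 + sqrt 5) / 2" "(1 + sqrt 5) / 2 < 2" by simp_all
qed
lemma tau_conj_bounds: "-1 < tau_conj" "tau_conj < 0"
  using tau_sum tau_bounds by linarith+

lemma no5: fixes k n :: nat shows "k^2 = 5*n^2 \<Longrightarrow> n = 0"
proof (induction n arbitrary: k rule: less_induct)
  case (less n)
  have d: "5 dvd m" if "m^2 mod 5 = 0" for m :: nat
  proof -
    have "m^2 mod 5 = (m mod 5)^2 mod 5" by (simp add: power_mod)
    moreover have "m mod 5 = 0 \<or> m mod 5 = 1 \<or> m mod 5 = 2 \<or> m mod 5 = 3 \<or> m mod 5 = 4" by auto
    ultimately have "m mod 5 = 0" using that by auto
    then show ?thesis by auto
  qed
  have "k^2 mod 5 = 0" using less.prems by simp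
  then have "5 dvd k" by (rule d)
  then obtain k' where k: "k = 5*k'" unfolding dvd_def by blast
  then have "n^2 = 5*k'^2" using less.prems by (simp add: power2_eq_square)
  then have "n^2 mod 5 = 0" by simp
  then have "5 dvd n" by (rule d)
  then obtain n' where n: "n = 5*n'" unfolding dvd_def by blast
  have "k'^2 = 5*n'^2" using \<open>n^2 = 5*k'^2\<close> n by (simp add: power2_eq_square)
  show "n = 0"
  proof (rule ccontr)
    assume "n \<noteq> 0"
    then have "n' < n" using n by simp
    then have "n' = 0" using less.IH \<open>k'^2 = 5*n'^2\<close> by blast
    then show False using n \<open>n \<noteq> 0\<close> by simp
  qed
qed

lemma int_tau_zero: fixes m n :: int assumes "of_int m + of_int n * tau = 0" shows "n = 0"
proof -
  have "of_int (2*m + n) = - of_int n * sqrt 5"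
    using assms unfolding tau_def by (simp add: field_simps)
  then have "(of_int (2*m+n))^2 = (of_int n)^2 * (5::real)"
    by (simp add: power_mult_distrib)
  then have "(2*m+n)^2 = 5 * n^2" by (metis of_int_eq_iff of_int_mult of_int_numeral of_int_power mult.commute)
  then have "(nat \<bar>2*m+n\<bar>)^2 = 5 * (nat \<bar>n\<bar>)^2"
    by (metis (mono_tags, lifting) abs_ge_zero nat_int nat_mult_distrib nat_power_eq
       power2_abs zero_le_numeral nat_numeral)
  then have "nat \<bar>n\<bar> = 0" by (rule no5)
  then show ?thesis by simp
qed

definition GI :: "complex \<Rightarrow> bool" where "GI z \<longleftrightarrow> Re z \<in> \<int> \<and> Im z \<in> \<int>"

lemma GI_add: "GI a \<Longrightarrow> GI b \<Longrightarrow> GI (a + b)" by (auto simp: GI_def)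
lemma GI_diff: "GI a \<Longrightarrow> GI b \<Longrightarrow> GI (a - b)" by (auto simp: GI_def)
lemma GI_minus: "GI a \<Longrightarrow> GI (- a)" by (auto simp: GI_def)
lemma GI_mult: "GI a \<Longrightarrow> GI b \<Longrightarrow> GI (a * b)" by (auto simp: GI_def)
lemma GI_0: "GI 0" and GI_1: "GI 1" and GI_i: "GI \<i>" by (auto simp: GI_def)
lemma GI_Complex: "GI (Complex (of_int a) (of_int b))" by (auto simp: GI_def)

lemma GI_ge1: assumes "GI z" "z \<noteq> 0" shows "1 \<le> cmod z"
proof -
  obtain a b where ab: "Re z = of_int a" "Im z = of_int b" using assms(1) unfolding GI_def by (auto elim!: Ints_cases)
  have "a \<noteq> 0 \<or> b \<noteq> 0" using assms(2) ab by (auto simp: complex_eq_iff)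
  then have "1 \<le> a^2 + b^2"
    by (metis add.commute add_increasing int_one_le_iff_zero_less zero_le_power2 zero_less_power2)
  then have "(1::real) \<le> of_int (a^2 + b^2)" by linarith
  then have "1 \<le> (Re z)^2 + (Im z)^2" using ab by simp
  then show ?thesis unfolding cmod_def by simp
qed

definition Zc :: "complex \<Rightarrow> complex \<Rightarrow> bool" where
  "Zc z w \<longleftrightarrow> (\<exists>u v. GI u \<and> GI v \<and> z = u + v * of_real tau \<and> w = u + v * of_real tau_conj)"

lemma tau_sq: "tau^2 = tau + 1" unfolding tau_def by (simp add: field_simps power2_eq_square)
lemma tau_conj_sq: "tau_conj^2 = tau_conj + 1" unfolding tau_conj_def by (simp add: field_simps power2_eq_square)

lemma ZcI: "GI u \<Longrightarrow> GI v \<Longrightarrow> z = u + v * of_real tau \<Longrightarrow> w = u + v * of_real tau_conj \<Longrightarrow> Zc z w"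
  unfolding Zc_def by blast
lemma Zc_add: assumes "Zc a b" "Zc c d" shows "Zc (a + c) (b + d)"
proof -
  obtain u v where h: "GI u" "GI v" "a = u + v * of_real tau" "b = u + v * of_real tau_conj"
    using assms(1) unfolding Zc_def by blast
  obtain u' v' where h': "GI u'" "GI v'" "c = u' + v' * of_real tau" "d = u' + v' * of_real tau_conj"
    using assms(2) unfolding Zc_def by blast
  show ?thesis by (rule ZcI[of "u+u'" "v+v'"]) (use h h' in \<open>auto intro: GI_add simp: algebra_simps\<close>)
qed
lemma Zc_diff: assumes "Zc a b" "Zc c d" shows "Zc (a - c) (b - d)"
proof -
  obtain u v where h: "GI u" "GI v" "a = u + v * of_real tau" "b = u + v * of_real tau_conj"
    using assms(1) unfolding Zc_def by blast
  obtain u' v' where h': "GI u'" "GI v'" "c = u' + v' * of_real tau" "d = u' + v' * of_real tau_conj"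
    using assms(2) unfolding Zc_def by blast
  show ?thesis by (rule ZcI[of "u-u'" "v-v'"]) (use h h' in \<open>auto intro: GI_diff simp: algebra_simps\<close>)
qed
lemma mult_gen: fixes t :: complex assumes "t * t = t + 1"
  shows "(u + v * t) * (u' + v' * t) = (u*u' + v*v') + (u*v' + v*u' + v*v') * t"
proof -
  have "(u + v * t) * (u' + v' * t) = u*u' + (u*v' + v*u') * t + v*v'*(t*t)" by (simp add: algebra_simps)
  also have "\<dots> = (u*u' + v*v') + (u*v' + v*u' + v*v') * t" unfolding assms by (simp add: algebra_simps)
  finally show ?thesis .
qed
lemma Zc_mult: assumes "Zc a b" "Zc c d" shows "Zc (a * c) (b * d)"
proof -
  obtain u v where h: "GI u" "GI v" "a = u + v * of_real tau" "b = u + v * of_real tau_conj"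
    using assms(1) unfolding Zc_def by blast
  obtain u' v' where h': "GI u'" "GI v'" "c = u' + v' * of_real tau" "d = u' + v' * of_real tau_conj"
    using assms(2) unfolding Zc_def by blast
  have t1: "complex_of_real tau * complex_of_real tau = complex_of_real tau + 1"
    using tau_sq by (metis of_real_1 of_real_add of_real_mult power2_eq_square)
  have t2: "complex_of_real tau_conj * complex_of_real tau_conj = complex_of_real tau_conj + 1"
    using tau_conj_sq by (metis of_real_1 of_real_add of_real_mult power2_eq_square)
  show ?thesis
    apply (rule ZcI[of "u*u' + v*v'" "u*v' + v*u' + v*v'"])
    using h h' by (auto intro!: GI_add GI_mult simp only: mult_gen[OF t1] mult_gen[OF t2])
qed
lemma Zc_i: "Zc \<i> \<i>" unfolding Zc_def by (rule exI[of _ \<i>], rule exI[of _ 0]) (auto simp: GI_i GI_0)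
lemma Zc_1: "Zc 1 1" unfolding Zc_def by (rule exI[of _ 1], rule exI[of _ 0]) (auto simp: GI_1 GI_0)
lemma Zc_tau: "Zc (of_real tau) (of_real tau_conj)" unfolding Zc_def by (rule exI[of _ 0], rule exI[of _ 1]) (auto simp: GI_1 GI_0)
lemma Zc_swap: assumes "Zc a b" shows "Zc b a"
proof -
  obtain u v where h: "GI u" "GI v" "a = u + v * of_real tau" "b = u + v * of_real tau_conj"
    using assms(1) unfolding Zc_def by blast
  have e1: "complex_of_real tau_conj = 1 - of_real tau" using tau_sum
    by (metis add_diff_cancel_left' of_real_1 of_real_add)
  have e2: "complex_of_real tau = 1 - of_real tau_conj" using tau_sum
    by (metis add_diff_cancel_right' of_real_1 of_real_add)
  show ?thesis
    apply (rule ZcI[of "u + v" "- v"])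
    using h apply (auto intro: GI_add GI_minus)
     apply (simp add: e1 algebra_simps)
    apply (simp add: e2 algebra_simps)
    done
qed
lemma Zc_pow: "Zc a b \<Longrightarrow> Zc (a ^ n) (b ^ n)"
  by (induction n) (auto intro: Zc_mult Zc_1)

lemma Zc_zero: assumes "Zc z w" "z = 0" shows "w = 0"
proof -
  obtain u v where h: "GI u" "GI v" "z = u + v * of_real tau" "w = u + v * of_real tau_conj"
    using assms(1) unfolding Zc_def by blast
  obtain a b c d where abcd: "Re u = of_int a" "Im u = of_int b" "Re v = of_int c" "Im v = of_int d"
    using h(1,2) unfolding GI_def by (auto elim!: Ints_cases)
  have "of_int a + of_int c * tau = 0" "of_int b + of_int d * tau = 0"
    using assms(2) h(3) abcd by (auto simp: complex_eq_iff)
  then have "c = 0" "d = 0" by (auto dest: int_tau_zero)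
  then have "v = 0" using abcd by (simp add: complex_eq_iff)
  then show ?thesis using assms(2) h by simp
qed

lemma Zc_diag: assumes "Zc z z" shows "GI z"
proof -
  obtain u v where h: "GI u" "GI v" "z = u + v * of_real tau" "z = u + v * of_real tau_conj"
    using assms(1) unfolding Zc_def by blast
  have "v * of_real tau = v * of_real tau_conj" using h(3,4) by (metis add_left_cancel)
  then have "v * (of_real tau - of_real tau_conj) = 0" by (simp add: right_diff_distrib)
  moreover have "tau \<noteq> tau_conj" using tau_diff by auto
  then have "(of_real tau :: complex) - of_real tau_conj \<noteq> 0" by simp
  ultimately have "v = 0" by simp
  then show ?thesis using h by simp
qed

lemma Zc_latval: "Zc (latval q) (latsigma q)"
  by (cases q) (auto simp: Zc_def intro!: GI_Complex)

lemma Zc_quad: assumes "Zc z w" obtains q where "latval q = z" "latsigma q = w"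
proof -
  obtain u v where h: "GI u" "GI v" "z = u + v * of_real tau" "w = u + v * of_real tau_conj"
    using assms(1) unfolding Zc_def by blast
  obtain a b c d where abcd: "Re u = of_int a" "Im u = of_int b" "Re v = of_int c" "Im v = of_int d"
    using h(1,2) unfolding GI_def by (auto elim!: Ints_cases)
  have "u = Complex (of_int a) (of_int b)" "v = Complex (of_int c) (of_int d)" using abcd by (auto simp: complex_eq_iff)
  then show ?thesis using that[of "(a,b,c,d)"] h by simp
qed

lemma pair_bound: fixes a c x y :: real assumes "x = a + c*tau" "y = a + c*tau_conj"
  shows "\<bar>c\<bar> \<le> \<bar>x\<bar> + \<bar>y\<bar>" "\<bar>a\<bar> \<le> 3*(\<bar>x\<bar> + \<bar>y\<bar>)"
proof -
  have "x - y = c * (tau - tau_conj)" using assms by (simp add: algebra_simps)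
  then have e: "x - y = c * sqrt 5" using tau_diff by simp
  have "1 \<le> sqrt 5" by simp
  have "\<bar>c\<bar> \<le> \<bar>c\<bar> * sqrt 5" using mult_left_mono[OF \<open>1 \<le> sqrt 5\<close>, of "\<bar>c\<bar>"] by simp
  also have "\<dots> = \<bar>x - y\<bar>" using e by (simp add: abs_mult)
  finally have "\<bar>c\<bar> \<le> \<bar>x - y\<bar>" .
  then show c: "\<bar>c\<bar> \<le> \<bar>x\<bar> + \<bar>y\<bar>" by linarith
  have "a = x - c * tau" using assms by simp
  moreover have "\<bar>c * tau\<bar> \<le> 2 * \<bar>c\<bar>"
  proof -
    have "\<bar>c * tau\<bar> = \<bar>c\<bar> * tau" using tau_bounds by (simp add: abs_mult)
    also have "\<dots> \<le> \<bar>c\<bar> * 2" using tau_bounds by (intro mult_left_mono) auto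
    finally show ?thesis by simp
  qed
  ultimately have "\<bar>a\<bar> \<le> \<bar>x\<bar> + \<bar>c * tau\<bar>" using abs_triangle_ineq4[of x "c*tau"] by simp
  moreover have aux: "A \<le> X + T \<Longrightarrow> C \<le> X + Y \<Longrightarrow> T \<le> 2*C \<Longrightarrow> 0 \<le> Y \<Longrightarrow> A \<le> 3*(X+Y)" for A X T C Y :: real by (simp add: algebra_simps)
  ultimately show "\<bar>a\<bar> \<le> 3*(\<bar>x\<bar> + \<bar>y\<bar>)" using c \<open>\<bar>c * tau\<bar> \<le> 2 * \<bar>c\<bar>\<close> abs_ge_zero[of y] by blast
qed

lemma coef_bound: assumes "latval (a,b,c,d) = z" "latsigma (a,b,c,d) = w"
  shows "\<bar>of_int a\<bar> \<le> 3*(cmod z + cmod w)" "\<bar>of_int b\<bar> \<le> 3*(cmod z + cmod w)"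
        "\<bar>of_int c\<bar> \<le> 3*(cmod z + cmod w)" "\<bar>of_int d\<bar> \<le> 3*(cmod z + cmod w)"
proof -
  have r: "Re z = of_int a + of_int c * tau" "Re w = of_int a + of_int c * tau_conj"
    and i: "Im z = of_int b + of_int d * tau" "Im w = of_int b + of_int d * tau_conj"
    using assms by auto
  have R: "\<bar>Re z\<bar> + \<bar>Re w\<bar> \<le> cmod z + cmod w" "\<bar>Im z\<bar> + \<bar>Im w\<bar> \<le> cmod z + cmod w"
    using abs_Re_le_cmod abs_Im_le_cmod by (smt (verit))+
  have le3: "A \<le> 3*X \<Longrightarrow> X \<le> Y \<Longrightarrow> A \<le> 3*Y" for A X Y :: real by linarith
  have le1: "A \<le> X \<Longrightarrow> X \<le> Y \<Longrightarrow> 0 \<le> Y \<Longrightarrow> A \<le> 3*Y" for A X Y :: real by linarith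
  have p: "0 \<le> cmod z + cmod w" by simp
  show "\<bar>of_int a\<bar> \<le> 3*(cmod z + cmod w)" by (rule le3[OF pair_bound(2)[OF r] R(1)])
  show "\<bar>of_int c\<bar> \<le> 3*(cmod z + cmod w)" by (rule le1[OF pair_bound(1)[OF r] R(1) p])
  show "\<bar>of_int b\<bar> \<le> 3*(cmod z + cmod w)" by (rule le3[OF pair_bound(2)[OF i] R(2)])
  show "\<bar>of_int d\<bar> \<le> 3*(cmod z + cmod w)" by (rule le1[OF pair_bound(1)[OF i] R(2) p])
qed

lemma val_bounds: assumes "q \<in> Lquad N" shows "cmod (latval q) \<le> 6*N" "cmod (latsigma q) \<le> 4*N"
proof -
  obtain a b c d where q: "q = (a,b,c,d)" by (cases q) auto
  have h: "\<bar>of_int a\<bar> \<le> N" "\<bar>of_int b\<bar> \<le> N" "\<bar>of_int c\<bar> \<le> N" "\<bar>of_int d\<bar> \<le> N"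
    using assms q unfolding Lquad_def by auto
  have N0: "0 \<le> N" using h(1) by linarith
  have c1: "cmod (Complex (of_int a) (of_int b)) \<le> 2*N" using cmod_le[of "Complex (of_int a) (of_int b)"] h by simp
  have c2: "cmod (Complex (of_int c) (of_int d)) \<le> 2*N" using cmod_le[of "Complex (of_int c) (of_int d)"] h by simp
  have "cmod (Complex (of_int c) (of_int d) * complex_of_real tau) \<le> 2*N*2"
    unfolding norm_mult norm_of_real using c2 tau_bounds N0
    by (intro mult_mono) auto
  moreover have "cmod (latval q) \<le> cmod (Complex (of_int a) (of_int b)) + cmod (Complex (of_int c) (of_int d) * complex_of_real tau)"
    unfolding q by (simp only: latval.simps norm_triangle_ineq)
  ultimately show "cmod (latval q) \<le> 6*N" using c1 by linarith
  have "cmod (Complex (of_int c) (of_int d) * complex_of_real tau_conj) \<le> 2*N*1"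
    unfolding norm_mult norm_of_real using c2 tau_conj_bounds N0
    by (intro mult_mono) auto
  moreover have "cmod (latsigma q) \<le> cmod (Complex (of_int a) (of_int b)) + cmod (Complex (of_int c) (of_int d) * complex_of_real tau_conj)"
    unfolding q by (simp only: latsigma.simps norm_triangle_ineq)
  ultimately show "cmod (latsigma q) \<le> 4*N" using c1 by linarith
qed

lemma sigma_nz: "latval q \<noteq> 0 \<Longrightarrow> latsigma q \<noteq> 0"
  using Zc_zero[OF Zc_swap[OF Zc_latval]] by blast

lemma det_nonzero_bound:
  assumes "latval q1 \<noteq> 0" "latval q2 \<noteq> 0"
  shows "detX q1 q2 \<noteq> 0"
    "1 \<le> cmod (detX q1 q2) * cmod (latsigma q1 * latval q2 - \<i> * latsigma q2 * latval q1)"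
proof -
  define x1 s1 x2 s2 where "x1 = latval q1" "s1 = latsigma q1" "x2 = latval q2" "s2 = latsigma q2"
  define S where "S = s1 * x2 - \<i> * s2 * x1"
  have det: "detX q1 q2 = x1 * s2 - \<i> * x2 * s1" unfolding detX_def x1_s1_x2_s2_def ..
  have z1: "Zc x1 s1" "Zc s1 x1" "Zc x2 s2" "Zc s2 x2" unfolding x1_s1_x2_s2_def
    by (auto intro: Zc_latval Zc_swap)
  have Z: "Zc (detX q1 q2) S" unfolding det S_def
    by (intro Zc_diff Zc_mult z1 Zc_i)
  have nz: "x1 \<noteq> 0" "s1 \<noteq> 0" "x2 \<noteq> 0" "s2 \<noteq> 0"
    using assms sigma_nz unfolding x1_s1_x2_s2_def by auto
  have dnz: "detX q1 q2 \<noteq> 0"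
  proof
    assume d0: "detX q1 q2 = 0"
    then have "S = 0" using Zc_zero[OF Z] by simp
    then have e2: "s1 * x2 = \<i> * s2 * x1" unfolding S_def by simp
    have e1: "x1 * s2 = \<i> * x2 * s1" using d0 det by simp
    have "(x1 * s2) * (s1 * x2) = (\<i> * x2 * s1) * (\<i> * s2 * x1)" using e1 e2 by simp
    then have "x1 * s2 * s1 * x2 = - (x1 * s2 * s1 * x2)" by (simp add: algebra_simps)
    then have "s1 = 0 \<or> s2 = 0 \<or> x1 = 0 \<or> x2 = 0" by auto
    then show False using nz by blast
  qed
  then show "detX q1 q2 \<noteq> 0" .
  have Snz: "S \<noteq> 0" using Zc_zero[OF Zc_swap[OF Z]] dnz by blast
  have "Zc (detX q1 q2 * S) (S * detX q1 q2)" using Zc_mult[OF Z Zc_swap[OF Z]] .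
  then have "GI (detX q1 q2 * S)" by (simp add: mult.commute Zc_diag)
  then have "1 \<le> cmod (detX q1 q2 * S)" using GI_ge1 dnz Snz by simp
  then show "1 \<le> cmod (detX q1 q2) * cmod (latsigma q1 * latval q2 - \<i> * latsigma q2 * latval q1)"
    unfolding S_def x1_s1_x2_s2_def by (simp add: norm_mult)
qed

lemma lower_bound:
  assumes "latval q1 \<noteq> 0" "latval q2 \<noteq> 0" "q1 \<in> Lquad N" "q2 \<in> Lquad N"
  shows "1 / (48 * N^2) \<le> cmod (detX q1 q2)"
proof -
  let ?S = "latsigma q1 * latval q2 - \<i> * latsigma q2 * latval q1"
  have b1: "cmod (latval q1) \<le> 6*N" "cmod (latsigma q1) \<le> 4*N" using val_bounds[OF assms(3)] by auto
  have b2: "cmod (latval q2) \<le> 6*N" "cmod (latsigma q2) \<le> 4*N" using val_bounds[OF assms(4)] by auto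
  have N0: "0 \<le> N" using b1 norm_ge_zero[of "latval q1"] by linarith
  have "cmod (latsigma q1) * cmod (latval q2) \<le> 4*N*(6*N)" 
    using b1 b2 N0 by (intro mult_mono) auto
  then have m1: "cmod (latsigma q1 * latval q2) \<le> 4*N*(6*N)" by (simp add: norm_mult)
  have "cmod (latsigma q2) * cmod (latval q1) \<le> 4*N*(6*N)" 
    using b1 b2 N0 by (intro mult_mono) auto
  then have m2: "cmod (\<i> * latsigma q2 * latval q1) \<le> 4*N*(6*N)" by (simp add: norm_mult)
  from m1 m2 have Sb: "cmod ?S \<le> 48 * N^2"
    using norm_triangle_ineq4[of "latsigma q1 * latval q2" "\<i> * latsigma q2 * latval q1"]
    by (simp add: power2_eq_square)
  have one: "1 \<le> cmod (detX q1 q2) * cmod ?S" using det_nonzero_bound(2)[OF assms(1,2)] .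
  then have Sp: "0 < cmod ?S" by (metis mult_zero_right norm_ge_zero not_one_le_zero order_le_less)
  have P: "0 < 48 * N^2" using Sb Sp by linarith
  have "1 / (48 * N^2) \<le> 1 / cmod ?S" by (rule divide_left_mono) (use Sb Sp P in auto)
  also have "\<dots> \<le> cmod (detX q1 q2)" using one Sp by (simp add: divide_le_eq mult.commute)
  finally show ?thesis .
qed

lemma detid0: fixes t t' U U' j :: complex
  assumes "t + t' = 1" "t * t' = -1" "U * U' = 1" "j * j = -1"
  shows "(j*U^3 + t'*U - j*t'*U' - U'^3) * (U'^2 - U^2 - j*t') - j * (U^2 - U'^2 - j*t) * (j*U'^3 + t*U' - j*t*U - U^3) = -2 * U'^5"
  using assms by algebra

lemma tri4: "cmod (a + b - c - d) \<le> cmod a + cmod b + cmod c + cmod d"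
  using norm_triangle_ineq4[of "a+b-c" d] norm_triangle_ineq4[of "a+b" c] norm_triangle_ineq[of a b] by linarith
lemma tri3: "cmod (a - b - c) \<le> cmod a + cmod b + cmod c"
  using norm_triangle_ineq4[of "a-b" c] norm_triangle_ineq4[of a b] by linarith

lemma construction:
  fixes n :: nat
  defines "T \<equiv> tau ^ (2*n)"
  shows "\<exists>q1 q2. latval q1 \<noteq> 0 \<and> latval q2 \<noteq> 0 \<and> q1 \<in> Lquad (30 * T^3) \<and> q2 \<in> Lquad (30 * T^2)
           \<and> cmod (detX q1 q2) = 2 / T^5"
proof -
  define T' where "T' = tau_conj ^ (2*n)"
  have TT: "T * T' = 1" unfolding T_def T'_def power_mult_distrib[symmetric] tau_prod
    by (simp add: power_mult)
  have T1: "1 \<le> T" unfolding T_def using tau_bounds by simp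
  have T'eq: "T' = 1 / T" using TT T1 by (simp add: field_simps)
  have T'p: "0 < T'" using T'eq T1 by simp
  have T'1: "T' \<le> 1" using T'eq T1 by simp
  define t t' U U' where "t = complex_of_real tau" "t' = complex_of_real tau_conj"
      "U = complex_of_real T" "U' = complex_of_real T'"
  note defs = t_t'_U_U'_def
  define x1 s1 x2 s2 where "x1 = \<i>*U^3 + t'*U - \<i>*t'*U' - U'^3" "s1 = \<i>*U'^3 + t*U' - \<i>*t*U - U^3"
    "x2 = U^2 - U'^2 - \<i>*t" "s2 = U'^2 - U^2 - \<i>*t'"
  have ZU: "Zc U U'" unfolding defs T_def T'_def of_real_power by (rule Zc_pow[OF Zc_tau])
  have Zt: "Zc t t'" unfolding defs by (rule Zc_tau)
  have Z1: "Zc x1 s1" unfolding x1_s1_x2_s2_def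
    by (intro Zc_diff Zc_add Zc_mult Zc_pow Zc_i ZU Zt Zc_swap)
  have Z2: "Zc x2 s2" unfolding x1_s1_x2_s2_def
    by (intro Zc_diff Zc_add Zc_mult Zc_pow Zc_i ZU Zt Zc_swap)
  obtain q1 where q1: "latval q1 = x1" "latsigma q1 = s1" using Zc_quad[OF Z1] by blast
  obtain q2 where q2: "latval q2 = x2" "latsigma q2 = s2" using Zc_quad[OF Z2] by blast
  have rel: "t + t' = 1" "t * t' = -1" "U * U' = 1" "\<i> * \<i> = -1"
    unfolding defs using tau_sum tau_prod TT
    by (metis of_real_1 of_real_add, metis of_real_1 of_real_minus of_real_mult, metis of_real_1 of_real_mult, simp)
  have det: "detX q1 q2 = -2 * U'^5" unfolding detX_def q1 q2 x1_s1_x2_s2_def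
    by (rule detid0[OF rel])
  have "cmod (detX q1 q2) = 2 * T'^5" unfolding det defs using T'p
    by (simp add: norm_mult norm_power)
  then have cd: "cmod (detX q1 q2) = 2 / T^5" unfolding T'eq by (simp add: power_one_over)
  have dnz: "detX q1 q2 \<noteq> 0" using det T'p unfolding defs by simp
  have x1nz: "x1 \<noteq> 0"
  proof
    assume "x1 = 0" then have "s1 = 0" using Zc_zero[OF Z1] by simp
    then show False using dnz \<open>x1 = 0\<close> unfolding detX_def q1 by simp
  qed
  have x2nz: "x2 \<noteq> 0"
  proof
    assume "x2 = 0" then have "s2 = 0" using Zc_zero[OF Z2] by simp
    then show False using dnz \<open>x2 = 0\<close> unfolding detX_def q2 by simp
  qed
  have nt: "cmod t \<le> 2" "cmod t' \<le> 1" unfolding defs using tau_bounds tau_conj_bounds by auto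
  have nU: "cmod U = T" "cmod U' = T'" unfolding defs using T1 T'p by auto
  have T23: "T \<le> T^2" "T^2 \<le> T^3" "1 \<le> T^2"
    using power_increasing[OF _ T1, of 1 2] power_increasing[OF _ T1, of 2 3] one_le_power[OF T1, of 2] by auto
  have T'n: "T'^2 \<le> 1" "T'^3 \<le> 1" using T'p T'1 by (auto simp: power_le_one)
  have m1: "cmod (t'*U) \<le> T" "cmod (\<i>*t'*U') \<le> T'" "cmod (t*U') \<le> 2*T'" "cmod (\<i>*t*U) \<le> 2*T"
    "cmod (\<i>*t) \<le> 2" "cmod (\<i>*t') \<le> 1"
    using mult_right_mono[OF nt(2), of T] mult_right_mono[OF nt(2), of T']
      mult_right_mono[OF nt(1), of T] mult_right_mono[OF nt(1), of T'] nt T1 T'p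
    by (simp_all add: norm_mult nU)
  have m2: "cmod (\<i>*U^3) = T^3" "cmod (U'^3) = T'^3" "cmod (U^3) = T^3" "cmod (\<i>*U'^3) = T'^3"
    "cmod (U^2) = T^2" "cmod (U'^2) = T'^2"
    by (simp_all add: norm_mult norm_power nU)
  have "cmod x1 \<le> T^3 + T + T' + T'^3" unfolding x1_s1_x2_s2_def
    using tri4[of "\<i>*U^3" "t'*U" "\<i>*t'*U'" "U'^3"] m1 m2 by linarith
  then have b1: "cmod x1 \<le> 4 * T^3" using T23 T'1 T'n by linarith
  have "cmod s1 \<le> T'^3 + 2 * T' + 2 * T + T^3" unfolding x1_s1_x2_s2_def
    using tri4[of "\<i>*U'^3" "t*U'" "\<i>*t*U" "U^3"] m1 m2 by linarith
  then have b2: "cmod s1 \<le> 6 * T^3" using T23 T'1 T'n by linarith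
  have "cmod x2 \<le> T^2 + T'^2 + 2" unfolding x1_s1_x2_s2_def
    using tri3[of "U^2" "U'^2" "\<i>*t"] m1 m2 by linarith
  then have b3: "cmod x2 \<le> 4 * T^2" using T23 T'n by linarith
  have "cmod s2 \<le> T'^2 + T^2 + 1" unfolding x1_s1_x2_s2_def
    using tri3[of "U'^2" "U^2" "\<i>*t'"] m1 m2 by linarith
  then have b4: "cmod s2 \<le> 3 * T^2" using T23 T'n by linarith
  have L1: "q1 \<in> Lquad (30 * T^3)"
  proof -
    obtain a b c d where q: "q1 = (a,b,c,d)" by (cases q1) auto
    have "3 * (cmod x1 + cmod s1) \<le> 30 * T^3" unfolding distrib_left using b1 b2 by linarith
    then show ?thesis using coef_bound[of a b c d x1 s1] q1 q unfolding Lquad_def by auto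
  qed
  have L2: "q2 \<in> Lquad (30 * T^2)"
  proof -
    obtain a b c d where q: "q2 = (a,b,c,d)" by (cases q2) auto
    have "3 * (cmod x2 + cmod s2) \<le> 30 * T^2" unfolding distrib_left using b3 b4 T23 by linarith
    then show ?thesis using coef_bound[of a b c d x2 s2] q2 q unfolding Lquad_def by auto
  qed
  show ?thesis using L1 L2 cd x1nz x2nz q1 q2 by blast
qed

lemma finite_Lquad: "finite (Lquad N)"
proof -
  let ?I = "{-\<lceil>N\<rceil>..\<lceil>N\<rceil>}"
  have "Lquad N \<subseteq> ?I \<times> ?I \<times> ?I \<times> ?I"
  proof
    fix q assume "q \<in> Lquad N"
    then obtain a b c d where q: "q = (a,b,c,d)" and h: "\<bar>of_int a\<bar> \<le> N" "\<bar>of_int b\<bar> \<le> N" "\<bar>of_int c\<bar> \<le> N" "\<bar>of_int d\<bar> \<le> N"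
      unfolding Lquad_def by auto
    have "x \<in> ?I" if "\<bar>of_int x\<bar> \<le> N" for x :: int
    proof -
      have "of_int x \<le> N" "- N \<le> of_int x" using that by linarith+
      have A: "(of_int x :: real) \<le> of_int \<lceil>N\<rceil>" using \<open>of_int x \<le> N\<close> le_of_int_ceiling[of N] by linarith
      have B: "(of_int (-\<lceil>N\<rceil>) :: real) \<le> of_int x" using \<open>- N \<le> of_int x\<close> le_of_int_ceiling[of N]
        unfolding of_int_minus by linarith
      note A B
      then have "x \<le> \<lceil>N\<rceil>" "-\<lceil>N\<rceil> \<le> x" by (simp_all only: of_int_le_iff)
      then show ?thesis by simp
    qed
    then show "q \<in> ?I \<times> ?I \<times> ?I \<times> ?I" using q h by auto
  qed
  then show ?thesis by (rule finite_subset) auto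
qed

lemma Dset_finite: "finite {cmod (detX q1 q2) | q1 q2.
      q1 \<in> Lquad N1 \<and> q2 \<in> Lquad N2 \<and> latval q1 \<noteq> 0 \<and> latval q2 \<noteq> 0}"
proof -
  have "{cmod (detX q1 q2) | q1 q2. q1 \<in> Lquad N1 \<and> q2 \<in> Lquad N2 \<and> latval q1 \<noteq> 0 \<and> latval q2 \<noteq> 0}
     \<subseteq> (\<lambda>(q1,q2). cmod (detX q1 q2)) ` (Lquad N1 \<times> Lquad N2)" by auto
  then show ?thesis by (rule finite_subset) (intro finite_imageI finite_cartesian_product finite_Lquad)
qed

lemma Dmin_le: assumes "q1 \<in> Lquad N1" "q2 \<in> Lquad N2" "latval q1 \<noteq> 0" "latval q2 \<noteq> 0"
  shows "Dmin N1 N2 \<le> cmod (detX q1 q2)"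
  unfolding Dmin_def by (rule Min_le[OF Dset_finite]) (use assms in blast)

lemma Lquad_mono: "q \<in> Lquad A \<Longrightarrow> A \<le> B \<Longrightarrow> q \<in> Lquad B"
  unfolding Lquad_def by auto

lemma one_in: "1 \<le> N \<Longrightarrow> (1,0,0,0) \<in> Lquad N" unfolding Lquad_def by auto

lemma Dmin_ge: assumes "1 \<le> N" shows "1 / (48 * N^2) \<le> Dmin N N"
  unfolding Dmin_def
proof (rule Min.boundedI[OF Dset_finite])
  have "latval (1,0,0,0) \<noteq> 0" by (simp add: complex_eq_iff)
  then show "{cmod (detX q1 q2) | q1 q2. q1 \<in> Lquad N \<and> q2 \<in> Lquad N \<and> latval q1 \<noteq> 0 \<and> latval q2 \<noteq> 0} \<noteq> {}"
    using one_in[OF assms] by blast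
  show "\<And>a. a \<in> {cmod (detX q1 q2) | q1 q2. q1 \<in> Lquad N \<and> q2 \<in> Lquad N \<and> latval q1 \<noteq> 0 \<and> latval q2 \<noteq> 0} \<Longrightarrow> 1 / (48 * N^2) \<le> a"
    using lower_bound by blast
qed

lemma floor_pow: fixes b M :: real assumes "1 < b" "1 \<le> M"
  obtains n :: nat where "b^n \<le> M" "M < b^n * b"
proof -
  define n where "n = nat \<lfloor>log b M\<rfloor>"
  have l0: "0 \<le> log b M" using assms by simp
  have rn: "real n = of_int \<lfloor>log b M\<rfloor>" unfolding n_def using l0 by simp
  have "b^n = b powr (real n)" using assms by (simp add: powr_realpow)
  also have "\<dots> \<le> b powr (log b M)"
  proof -
    have "real n \<le> log b M" using rn by simp
    then show ?thesis using powr_mono[of "real n" "log b M" b] assms by simp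
  qed
  also have "\<dots> = M" using assms by simp
  finally have A: "b^n \<le> M" .
  have "M = b powr (log b M)" using assms by simp
  also have "\<dots> < b powr (real (Suc n))"
  proof -
    have "log b M < real (Suc n)" using rn real_of_int_floor_add_one_gt[of "log b M"] by (simp only: of_nat_Suc)
    then show ?thesis using assms(1) by simp
  qed
  also have "\<dots> = b ^ Suc n" using assms by (intro powr_realpow) simp
  also have "\<dots> = b^n * b" by (simp add: mult.commute)
  finally show ?thesis using that A by blast
qed

lemma part1: "\<exists>K>0. \<forall>N::real. N \<ge> 1 \<longrightarrow> (\<exists>q1 q2. q1 \<in> Lquad (N powr (3/5)) \<and> q2 \<in> Lquad (N powr (2/5))
    \<and> latval q1 \<noteq> 0 \<and> latval q2 \<noteq> 0 \<and> cmod (detX q1 q2) \<le> K / N)"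
proof -
  define K :: real where "K = 2 * 30^5 * tau^10"
  have tau10: "1 \<le> tau^10" using tau_bounds by simp
  have K0: "0 < K" unfolding K_def using tau_bounds by simp
  have "\<forall>N::real. N \<ge> 1 \<longrightarrow> (\<exists>q1 q2. q1 \<in> Lquad (N powr (3/5)) \<and> q2 \<in> Lquad (N powr (2/5))
    \<and> latval q1 \<noteq> 0 \<and> latval q2 \<noteq> 0 \<and> cmod (detX q1 q2) \<le> K / N)"
  proof (intro allI impI)
  fix N :: real assume N1: "1 \<le> N"
  show "\<exists>q1 q2. q1 \<in> Lquad (N powr (3/5)) \<and> q2 \<in> Lquad (N powr (2/5))
    \<and> latval q1 \<noteq> 0 \<and> latval q2 \<noteq> 0 \<and> cmod (detX q1 q2) \<le> K / N"
  proof (cases "N < 30^5")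
    case True
    let ?q = "(1::int,0::int,0::int,0::int)"
    have l1: "?q \<in> Lquad (N powr (3/5))" "?q \<in> Lquad (N powr (2/5))"
      using one_in ge_one_powr_ge_zero[OF N1] by auto
    have nz: "latval ?q \<noteq> 0" by (simp add: complex_eq_iff)
    have d: "detX ?q ?q = 1 - \<i>" unfolding detX_def by (simp add: complex_eq_iff)
    have "cmod (1 - \<i>) \<le> 2" using norm_triangle_ineq4[of 1 \<i>] by simp
    moreover have "2 \<le> K / N"
    proof -
      have "2 * N \<le> 2 * 30^5" using True by simp
      also have "\<dots> \<le> K" unfolding K_def using tau10 by simp
      finally show ?thesis using N1 by (simp add: field_simps)
    qed
    ultimately show ?thesis using l1 nz d by force
  next
    case False
    define P where "P = N powr (1/5)"
    have P5: "P^5 = N" unfolding P_def using N1 by (simp add: powr_power)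
    have P30: "30 \<le> P"
    proof (rule ccontr)
      assume "\<not> 30 \<le> P"
      then have "P^5 < 30^5" using P_def by (intro power_strict_mono) auto
      then show False using P5 False by simp
    qed
    define M where "M = P / 30"
    have M1: "1 \<le> M" unfolding M_def using P30 by simp
    have b1: "1 < tau^2" using tau_bounds by (simp add: one_less_power)
    obtain n where n: "(tau^2)^n \<le> M" "M < (tau^2)^n * tau^2" using floor_pow[OF b1 M1] by blast
    define T where "T = tau^(2*n)"
    have Tn: "T = (tau^2)^n" unfolding T_def by (simp add: power_mult)
    have T1: "1 \<le> T" unfolding T_def using tau_bounds by simp
    obtain q1 q2 where q: "latval q1 \<noteq> 0" "latval q2 \<noteq> 0" "q1 \<in> Lquad (30 * T^3)" "q2 \<in> Lquad (30 * T^2)"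
           "cmod (detX q1 q2) = 2 / T^5" using construction[of n] unfolding T_def by blast
    have TP: "30 * T \<le> P" using n(1) unfolding Tn M_def by simp
    have "30 * T^3 \<le> (30*T)^3" using T1 by (simp add: power_mult_distrib)
    also have "\<dots> \<le> P^3" using TP T1 by (intro power_mono) auto
    also have "\<dots> = N powr (3/5)" unfolding P_def using N1 by (simp add: powr_power)
    finally have L1: "q1 \<in> Lquad (N powr (3/5))" using Lquad_mono q(3) by blast
    have "30 * T^2 \<le> (30*T)^2" using T1 by (simp add: power_mult_distrib)
    also have "\<dots> \<le> P^2" using TP T1 by (intro power_mono) auto
    also have "\<dots> = N powr (2/5)" unfolding P_def using N1 by (simp add: powr_power)
    finally have L2: "q2 \<in> Lquad (N powr (2/5))" using Lquad_mono q(4) by blast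
    have "P < 30 * (T * tau^2)" using n(2) unfolding Tn M_def by simp
    then have "P^5 \<le> (30 * (T * tau^2))^5" using P30 by (intro power_mono) auto
    then have NT: "N \<le> 30^5 * T^5 * tau^10" using P5 by (simp add: power_mult_distrib flip: power_mult)
    have "2 / T^5 \<le> K / N"
    proof -
      have "2 * N \<le> K * T^5" using NT unfolding K_def by simp
      then show ?thesis using T1 N1 by (simp add: field_simps)
    qed
    then have "cmod (detX q1 q2) \<le> K / N" using q(5) by simp
    then show ?thesis using L1 L2 q(1,2) by blast
  qed
  qed
  then show ?thesis using K0 by blast
qed

theorem corollary3p2:
  shows "(\<exists>K>0. \<forall>N::real. N \<ge> 1 \<longrightarrow> Dmin (N powr (3/5)) (N powr (2/5)) \<le> K / N)
       \<and> (\<exists>Cl>0. \<exists>Cu>0. \<forall>\<^sub>F N in at_top.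
            Cl / N\<^sup>2 \<le> Dmin N N \<and> Dmin N N \<le> Cu / N powr (5/3))"
proof -
  obtain K where K0: "K > 0" and K: "\<And>N::real. N \<ge> 1 \<Longrightarrow> (\<exists>q1 q2. q1 \<in> Lquad (N powr (3/5)) \<and> q2 \<in> Lquad (N powr (2/5))
    \<and> latval q1 \<noteq> 0 \<and> latval q2 \<noteq> 0 \<and> cmod (detX q1 q2) \<le> K / N)"
    using part1 by blast
  have A: "\<forall>N::real. N \<ge> 1 \<longrightarrow> Dmin (N powr (3/5)) (N powr (2/5)) \<le> K / N"
  proof (intro allI impI)
    fix N :: real assume "1 \<le> N"
    then obtain q1 q2 where q: "q1 \<in> Lquad (N powr (3/5))" "q2 \<in> Lquad (N powr (2/5))"
      "latval q1 \<noteq> 0" "latval q2 \<noteq> 0" "cmod (detX q1 q2) \<le> K / N" using K by blast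
    show "Dmin (N powr (3/5)) (N powr (2/5)) \<le> K / N" using Dmin_le[OF q(1-4)] q(5) by linarith
  qed
  have B: "\<forall>\<^sub>F N in at_top. (1/48) / N\<^sup>2 \<le> Dmin N N \<and> Dmin N N \<le> K / N powr (5/3)"
    using eventually_ge_at_top[of "1::real"]
  proof (rule eventually_mono)
    fix N :: real assume N1: "1 \<le> N"
    have lo: "(1/48) / N\<^sup>2 \<le> Dmin N N" using Dmin_ge[OF N1] by simp
    define M where "M = N powr (5/3)"
    have M1: "1 \<le> M" unfolding M_def using ge_one_powr_ge_zero[OF N1] by simp
    obtain q1 q2 where q: "q1 \<in> Lquad (M powr (3/5))" "q2 \<in> Lquad (M powr (2/5))"
      "latval q1 \<noteq> 0" "latval q2 \<noteq> 0" "cmod (detX q1 q2) \<le> K / M" using K[OF M1] by blast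
    have e1: "M powr (3/5) = N" unfolding M_def powr_powr using N1 by simp
    have e2: "M powr (2/5) = N powr (2/3)" unfolding M_def powr_powr by simp
    have "N powr (2/3) \<le> N powr 1" using N1 by (intro powr_mono) auto
    then have e3: "M powr (2/5) \<le> N" using e2 N1 by simp
    have "Dmin N N \<le> cmod (detX q1 q2)"
      using Dmin_le[of q1 N q2 N] q(1-4) e1 Lquad_mono[OF q(2) e3] by simp
    then have up: "Dmin N N \<le> K / N powr (5/3)" using q(5) unfolding M_def by linarith
    show "(1/48) / N\<^sup>2 \<le> Dmin N N \<and> Dmin N N \<le> K / N powr (5/3)" using lo up by blast
  qed
  have C: "\<exists>Cl>0. \<exists>Cu>0. \<forall>\<^sub>F N in at_top. Cl / N\<^sup>2 \<le> Dmin N N \<and> Dmin N N \<le> Cu / N powr (5/3)"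
    by (rule exI[of _ "1/48"], simp only: conj_commute[of "0 < 1/48"], intro conjI exI[of _ K])
       (use B K0 in auto)
  show ?thesis using A K0 C by blast
qed

end
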